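(* Let $C\in\mathbb{R}$ with $|C|\neq 1$, and let $S = C\partial_x + \partial_t$. Let $a\in C^2(\mathbb{R},[0,\infty))$ with $a(t)=0$ for $t\le 0$ and $a(t)=1$ for $t>t_0$ (some $t_0>0$), and let $b\in C^2(\mathbb{R},\mathbb{R})$ with $b(x)=0$ for $x\notin(-L,L)$ (some $L>0$). Put $h(x,t)=a(t)b(x)$. Then the solution $f$ of the linear shallow-water problem $$(S^2-\partial_x^2)f = S^2 h \quad (x\in\mathbb{R},\ t>0),\qquad f(x,0)=0,\quad f_t(x,0)=0,$$ is given by $$f(x,t) = \frac12\int_0^t\int_{x-(t-s)(C+1)}^{x-(t-s)(C-1)} (S^2h)(r,s)\,dr\,ds$$ and this equals $$f(x,t) = a(t)b(x) + \frac12\int_0^t a(s)\Big[b'\big(x-(t-s)(C-1)\big) - b'\big(x-(t-s)(C+1)\big)\Big]\,ds .$$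
   Context: This is the shallow-water ($\delta\to0$), irrotational-current limit of a linearized water-wave model: $f(x,t)$ is the non-dimensional free-surface displacement, $h(x,t)$ the non-dimensional displacement of the sea bed (seabed motion $a(t)$ in time, localized profile $b(x)$), and $C$ the non-dimensional constant horizontal velocity of the background current. *)

theory Defs
  imports "HOL-Analysis.Analysis"
begin

text \<open>Functions of two variables are written h x t (space x first, time t second).\<close>

text \<open>The operator S^2 = (C d/dx + d/dt)^2 applied to a (sufficiently smooth) h, written via
  iterated one-variable derivatives:
  S^2 h = h_tt + C (h_x)_t + C (h_t)_x + C^2 h_xx.\<close>
definition S2 :: "real \<Rightarrow> (real \<Rightarrow> real \<Rightarrow> real) \<Rightarrow> real \<Rightarrow> real \<Rightarrow> real" where
  "S2 C h x t =
     deriv (\<lambda>s. deriv (\<lambda>s'. h x s') s) t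
   + C * deriv (\<lambda>s. deriv (\<lambda>y. h y s) x) t
   + C * deriv (\<lambda>y. deriv (\<lambda>s. h y s) t) x
   + C^2 * deriv (\<lambda>y. deriv (\<lambda>y'. h y' t) y) x"

definition is_solution :: "real \<Rightarrow> (real \<Rightarrow> real \<Rightarrow> real) \<Rightarrow> (real \<Rightarrow> real \<Rightarrow> real) \<Rightarrow> bool" where
  "is_solution C g f \<longleftrightarrow>
    (\<exists>fx ft fxx fxt ftx ftt :: real \<Rightarrow> real \<Rightarrow> real.
      (\<forall>x t. t > 0 \<longrightarrow>
          ((\<lambda>y. f y t) has_real_derivative fx x t) (at x)
        \<and> ((\<lambda>s. f x s) has_real_derivative ft x t) (at t)
        \<and> ((\<lambda>y. fx y t) has_real_derivative fxx x t) (at x)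
        \<and> ((\<lambda>s. fx x s) has_real_derivative fxt x t) (at t)
        \<and> ((\<lambda>y. ft y t) has_real_derivative ftx x t) (at x)
        \<and> ((\<lambda>s. ft x s) has_real_derivative ftt x t) (at t))
    \<and> continuous_on (UNIV \<times> {0<..}) (\<lambda>(x,t). fx x t)
    \<and> continuous_on (UNIV \<times> {0<..}) (\<lambda>(x,t). fxx x t)
    \<and> continuous_on (UNIV \<times> {0<..}) (\<lambda>(x,t). fxt x t)
    \<and> continuous_on (UNIV \<times> {0<..}) (\<lambda>(x,t). ftx x t)
    \<and> continuous_on (UNIV \<times> {0<..}) (\<lambda>(x,t). ftt x t)
    \<and> (\<forall>x. ((\<lambda>s. f x s) has_real_derivative ft x 0) (at_right 0))
    \<and> continuous_on (UNIV \<times> {0..}) (\<lambda>(x,t). f x t)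
    \<and> continuous_on (UNIV \<times> {0..}) (\<lambda>(x,t). ft x t)
    \<and> (\<forall>x t. t > 0 \<longrightarrow>
          ftt x t + C * fxt x t + C * ftx x t + C^2 * fxx x t - fxx x t = g x t)
    \<and> (\<forall>x. f x 0 = 0)
    \<and> (\<forall>x. ft x 0 = 0))"

end

theory Submission
  imports Defs
begin


definition conv :: "(real\<Rightarrow>real) \<Rightarrow> (real\<Rightarrow>real) \<Rightarrow> real \<Rightarrow> real \<Rightarrow> real \<Rightarrow> real" where
  "conv \<phi> \<psi> k x t = integral {0..t} (\<lambda>s. \<phi> s * \<psi> (x - (t - s) * k))"

definition sig :: "(real\<Rightarrow>real) \<Rightarrow> (real\<Rightarrow>real) \<Rightarrow> real \<Rightarrow> real \<Rightarrow> real \<Rightarrow> real \<Rightarrow> real" where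
  "sig \<phi> \<psi> k M x t = integral {0..M} (\<lambda>\<sigma>. \<phi> (t - \<sigma>) * \<psi> (x - \<sigma> * k))"

lemma integral_flip: "integral {0..t} (\<lambda>\<sigma>. f (t - \<sigma>)) = integral {0..t} (f::real\<Rightarrow>real)"
proof -
  have 1: "integral {0..t} (\<lambda>x. f (t - x)) = integral {-t..0} (\<lambda>u. f (t+u))"
    using Henstock_Kurzweil_Integration.integral_reflect_real[of 0 "-t" "\<lambda>u. f (t+u)"]
    by (simp only: minus_minus minus_zero diff_conv_add_uminus)
  have 2: "integral {-t..0} (f \<circ> (+) t) = integral {-t+t..0+t} f" by (rule integral_shift_Icc_real)
  from 1 2 show ?thesis by (simp add: o_def add.commute)
qed

lemma conv_sig:
  assumes c\<phi>: "continuous_on UNIV \<phi>" and c\<psi>: "continuous_on UNIV \<psi>"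
    and z: "\<And>s. s \<le> 0 \<Longrightarrow> \<phi> s = 0" and tM: "t \<le> M" and M: "0 \<le> M"
  shows "conv \<phi> \<psi> k x t = sig \<phi> \<psi> k M x t"
proof (cases "t \<le> 0")
  case True
  have "conv \<phi> \<psi> k x t = 0" unfolding conv_def using True by (cases "t = 0") auto
  moreover have "sig \<phi> \<psi> k M x t = 0" unfolding sig_def
    by (subst integral_cong[where g="\<lambda>_. 0"]) (use True in \<open>auto intro!: z\<close>)
  ultimately show ?thesis by simp
next
  case False
  have int: "(\<lambda>\<sigma>. \<phi> (t - \<sigma>) * \<psi> (x - \<sigma> * k)) integrable_on {0..M}"
    by (intro integrable_continuous_interval continuous_intros continuous_on_compose2[OF c\<phi>]
        continuous_on_compose2[OF c\<psi>]) auto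
  have "sig \<phi> \<psi> k M x t = integral {0..t} (\<lambda>\<sigma>. \<phi> (t - \<sigma>) * \<psi> (x - \<sigma> * k))
       + integral {t..M} (\<lambda>\<sigma>. \<phi> (t - \<sigma>) * \<psi> (x - \<sigma> * k))"
    unfolding sig_def using Henstock_Kurzweil_Integration.integral_combine[OF _ _ int, of t] False tM by auto
  also have "integral {t..M} (\<lambda>\<sigma>. \<phi> (t - \<sigma>) * \<psi> (x - \<sigma> * k)) = 0"
    by (subst integral_cong[where g="\<lambda>_. 0"]) (auto simp: z)
  also have "integral {0..t} (\<lambda>\<sigma>. \<phi> (t - \<sigma>) * \<psi> (x - \<sigma> * k))
      = integral {0..t} (\<lambda>\<sigma>. (\<lambda>s. \<phi> s * \<psi> (x - (t - s) * k)) (t - \<sigma>))" by simp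
  also have "\<dots> = conv \<phi> \<psi> k x t" unfolding conv_def by (rule integral_flip)
  finally show ?thesis by simp
qed

lemma conv_dx:
  assumes c\<phi>: "continuous_on UNIV \<phi>" and c\<psi>': "continuous_on UNIV \<psi>'"
    and d\<psi>: "\<And>y. (\<psi> has_real_derivative \<psi>' y) (at y)"
  shows "((\<lambda>y. conv \<phi> \<psi> k y t) has_real_derivative conv \<phi> \<psi>' k x t) (at x)"
proof -
  have "((\<lambda>y. integral (cbox 0 t) (\<lambda>s. \<phi> s * \<psi> (y - (t - s) * k))) has_field_derivative
     integral (cbox 0 t) (\<lambda>s. \<phi> s * \<psi>' (x - (t - s) * k))) (at x within UNIV)"
  proof (rule leibniz_rule_field_derivative[where fx = "\<lambda>y s. \<phi> s * \<psi>' (y - (t - s) * k)"])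
    fix y s :: real
    have "((\<lambda>y. \<psi> (y - (t - s) * k)) has_real_derivative \<psi>' (y - (t - s) * k) * 1) (at y)"
      by (rule DERIV_chain2[OF d\<psi>]) (auto intro!: derivative_eq_intros)
    then show "((\<lambda>y. \<phi> s * \<psi> (y - (t - s) * k)) has_field_derivative \<phi> s * \<psi>' (y - (t - s) * k)) (at y within UNIV)"
      using DERIV_cmult by fastforce
  next
    fix y :: real
    have c\<psi>: "continuous_on UNIV \<psi>" using d\<psi>
      by (meson DERIV_continuous continuous_at_imp_continuous_on)
    show "(\<lambda>s. \<phi> s * \<psi> (y - (t - s) * k)) integrable_on cbox 0 t"
      by (intro integrable_continuous continuous_intros continuous_on_compose2[OF c\<phi>]
        continuous_on_compose2[OF c\<psi>]) auto
  next
    show "continuous_on (UNIV \<times> cbox 0 t) (\<lambda>(y, s). \<phi> s * \<psi>' (y - (t - s) * k))"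
      unfolding split_beta
      by (intro continuous_intros continuous_on_compose2[OF c\<phi>]
        continuous_on_compose2[OF c\<psi>']) auto
  qed auto
  then show ?thesis by (simp add: conv_def)
qed

lemma sig_dt:
  assumes c\<psi>: "continuous_on UNIV \<psi>" and c\<phi>': "continuous_on UNIV \<phi>'"
    and d\<phi>: "\<And>y. (\<phi> has_real_derivative \<phi>' y) (at y)"
  shows "((\<lambda>s. sig \<phi> \<psi> k M x s) has_real_derivative sig \<phi>' \<psi> k M x t) (at t)"
proof -
  have "((\<lambda>s. integral (cbox 0 M) (\<lambda>\<sigma>. \<phi> (s - \<sigma>) * \<psi> (x - \<sigma> * k))) has_field_derivative
     integral (cbox 0 M) (\<lambda>\<sigma>. \<phi>' (t - \<sigma>) * \<psi> (x - \<sigma> * k))) (at t within UNIV)"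
  proof (rule leibniz_rule_field_derivative[where fx = "\<lambda>s \<sigma>. \<phi>' (s - \<sigma>) * \<psi> (x - \<sigma> * k)"])
    fix s \<sigma> :: real
    have "((\<lambda>s. \<phi> (s - \<sigma>)) has_real_derivative \<phi>' (s - \<sigma>) * 1) (at s)"
      by (rule DERIV_chain2[OF d\<phi>]) (auto intro!: derivative_eq_intros)
    then show "((\<lambda>s. \<phi> (s - \<sigma>) * \<psi> (x - \<sigma> * k)) has_field_derivative \<phi>' (s - \<sigma>) * \<psi> (x - \<sigma> * k)) (at s within UNIV)"
      using DERIV_cmult_right by fastforce
  next
    fix s :: real
    have c\<phi>: "continuous_on UNIV \<phi>" using d\<phi>
      by (meson DERIV_continuous continuous_at_imp_continuous_on)
    show "(\<lambda>\<sigma>. \<phi> (s - \<sigma>) * \<psi> (x - \<sigma> * k)) integrable_on cbox 0 M"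
      by (intro integrable_continuous continuous_intros continuous_on_compose2[OF c\<phi>]
        continuous_on_compose2[OF c\<psi>]) auto
  next
    show "continuous_on (UNIV \<times> cbox 0 M) (\<lambda>(s, \<sigma>). \<phi>' (s - \<sigma>) * \<psi> (x - \<sigma> * k))"
      unfolding split_beta
      by (intro continuous_intros continuous_on_compose2[OF c\<phi>']
        continuous_on_compose2[OF c\<psi>]) auto
  qed auto
  then show ?thesis by (simp add: sig_def)
qed

lemma conv_dt:
  assumes c\<psi>: "continuous_on UNIV \<psi>" and c\<phi>': "continuous_on UNIV \<phi>'"
    and d\<phi>: "\<And>y. (\<phi> has_real_derivative \<phi>' y) (at y)"
    and z: "\<And>s. s \<le> 0 \<Longrightarrow> \<phi> s = 0" and z': "\<And>s. s \<le> 0 \<Longrightarrow> \<phi>' s = 0"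
  shows "((\<lambda>s. conv \<phi> \<psi> k x s) has_real_derivative conv \<phi>' \<psi> k x t) (at t)"
proof -
  have c\<phi>: "continuous_on UNIV \<phi>" using d\<phi>
    by (meson DERIV_continuous continuous_at_imp_continuous_on)
  define M where "M = \<bar>t\<bar> + 1"
  have M: "0 \<le> M" "t < M" unfolding M_def by auto
  have "((\<lambda>s. sig \<phi> \<psi> k M x s) has_real_derivative sig \<phi>' \<psi> k M x t) (at t)"
    by (rule sig_dt[OF c\<psi> c\<phi>' d\<phi>])
  then have "((\<lambda>s. conv \<phi> \<psi> k x s) has_real_derivative sig \<phi>' \<psi> k M x t) (at t)"
    by (rule has_field_derivative_transform_within_open[where S="{..<M}"])
       (use M in \<open>force intro: conv_sig[OF c\<phi> c\<psi> z, symmetric]\<close>)+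
  then show ?thesis using conv_sig[OF c\<phi>' c\<psi> z', of t M] M by simp
qed

lemma conv_cont:
  assumes c\<phi>: "continuous_on UNIV \<phi>" and c\<psi>: "continuous_on UNIV \<psi>"
    and z: "\<And>s. s \<le> 0 \<Longrightarrow> \<phi> s = 0"
  shows "continuous_on UNIV (\<lambda>(x,t). conv \<phi> \<psi> k x t)"
  unfolding continuous_on_eq_continuous_at[OF open_UNIV]
proof (intro ballI)
  fix p :: "real \<times> real"
  obtain x0 t0 where p: "p = (x0, t0)" by force
  define M where "M = \<bar>t0\<bar> + 1"
  have M: "0 \<le> M" "t0 < M" unfolding M_def by auto
  have "continuous_on UNIV (\<lambda>q. integral (cbox 0 M) ((\<lambda>q \<sigma>. \<phi> (snd q - \<sigma>) * \<psi> (fst q - \<sigma> * k)) q))"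
    by (rule integral_continuous_on_param)
      (auto simp: split_beta intro!: continuous_intros continuous_on_compose2[OF c\<phi>]
        continuous_on_compose2[OF c\<psi>])
  then have "continuous (at p) (\<lambda>q. sig \<phi> \<psi> k M (fst q) (snd q))"
    using p by (auto simp: sig_def continuous_on_eq_continuous_at)
  then show "isCont (\<lambda>(x,t). conv \<phi> \<psi> k x t) p"
  proof (rule continuous_transform_within[where \<delta>=1])
    fix q :: "real \<times> real"
    assume "dist q p < 1"
    then have "dist (snd q) (snd p) < 1" using dist_snd_le[of q p] by linarith
    then have "snd q \<le> M" using M p by (auto simp: M_def dist_real_def)
    then show "sig \<phi> \<psi> k M (fst q) (snd q) = (\<lambda>(x,t). conv \<phi> \<psi> k x t) q"
      using conv_sig[OF c\<phi> c\<psi> z _ M(1)] by (simp add: split_beta)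
  qed auto
qed

lemma conv_ibp:
  assumes d\<phi>: "\<And>y. (\<phi> has_real_derivative \<phi>' y) (at y)" and c\<phi>': "continuous_on UNIV \<phi>'"
    and d\<psi>: "\<And>y. (\<psi> has_real_derivative \<psi>' y) (at y)" and c\<psi>': "continuous_on UNIV \<psi>'"
    and z: "\<And>s. s \<le> 0 \<Longrightarrow> \<phi> s = 0"
  shows "k * conv \<phi> \<psi>' k x t + conv \<phi>' \<psi> k x t = \<phi> t * \<psi> x"
proof (cases "t \<le> 0")
  case True
  then show ?thesis by (cases "t = 0") (auto simp: conv_def z)
next
  case False
  have c\<phi>: "continuous_on UNIV \<phi>" using d\<phi>
    by (meson DERIV_continuous continuous_at_imp_continuous_on)
  have c\<psi>: "continuous_on UNIV \<psi>" using d\<psi>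
    by (meson DERIV_continuous continuous_at_imp_continuous_on)
  have der: "((\<lambda>s. \<phi> s * \<psi> (x - (t - s) * k)) has_real_derivative
      (\<phi>' s * \<psi> (x - (t - s) * k) + k * (\<phi> s * \<psi>' (x - (t - s) * k)))) (at s)" for s
  proof -
    have "((\<lambda>s. \<psi> (x - (t - s) * k)) has_real_derivative \<psi>' (x - (t - s) * k) * k) (at s)"
      by (rule DERIV_chain2[OF d\<psi>]) (auto intro!: derivative_eq_intros)
    from DERIV_mult[OF d\<phi> this] show ?thesis by (simp add: algebra_simps)
  qed
  have "((\<lambda>s. \<phi>' s * \<psi> (x - (t - s) * k) + k * (\<phi> s * \<psi>' (x - (t - s) * k))) has_integral
      (\<phi> t * \<psi> (x - (t - t) * k) - \<phi> 0 * \<psi> (x - (t - 0) * k))) {0..t}"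
    by (rule fundamental_theorem_of_calculus)
      (use False der in \<open>auto simp: has_real_derivative_iff_has_vector_derivative[symmetric]
        intro: has_field_derivative_at_within\<close>)
  then have I: "((\<lambda>s. \<phi>' s * \<psi> (x - (t - s) * k) + k * (\<phi> s * \<psi>' (x - (t - s) * k))) has_integral
      (\<phi> t * \<psi> x)) {0..t}" by (simp add: z)
  have i1: "(\<lambda>s. \<phi>' s * \<psi> (x - (t - s) * k)) integrable_on {0..t}"
    by (intro integrable_continuous_interval continuous_intros continuous_on_compose2[OF c\<phi>']
        continuous_on_compose2[OF c\<psi>]) auto
  have i2: "(\<lambda>s. \<phi> s * \<psi>' (x - (t - s) * k)) integrable_on {0..t}"
    by (intro integrable_continuous_interval continuous_intros continuous_on_compose2[OF c\<phi>]
        continuous_on_compose2[OF c\<psi>']) auto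
  have "\<phi> t * \<psi> x = integral {0..t} (\<lambda>s. \<phi>' s * \<psi> (x - (t - s) * k) + k * (\<phi> s * \<psi>' (x - (t - s) * k)))"
    using I by (simp add: integral_unique)
  also have "\<dots> = conv \<phi>' \<psi> k x t + k * conv \<phi> \<psi>' k x t"
    unfolding conv_def using i1 i2
    by (simp only: integral_add[OF i1 integrable_on_mult_right[OF i2]] integral_mult[OF i2])
  finally show ?thesis by simp
qed



lemma schwarz:
  fixes f fx ft fxt ftx :: "real \<Rightarrow> real \<Rightarrow> real"
  assumes dfx: "\<And>x t. t > 0 \<Longrightarrow> ((\<lambda>y. f y t) has_real_derivative fx x t) (at x)"
    and dft: "\<And>x t. t > 0 \<Longrightarrow> ((\<lambda>s. f x s) has_real_derivative ft x t) (at t)"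
    and dfxt: "\<And>x t. t > 0 \<Longrightarrow> ((\<lambda>s. fx x s) has_real_derivative fxt x t) (at t)"
    and dftx: "\<And>x t. t > 0 \<Longrightarrow> ((\<lambda>y. ft y t) has_real_derivative ftx x t) (at x)"
    and c1: "continuous_on (UNIV \<times> {0<..}) (\<lambda>(x,t). fxt x t)"
    and c2: "continuous_on (UNIV \<times> {0<..}) (\<lambda>(x,t). ftx x t)"
    and t0: "t0 > 0"
  shows "fxt x0 t0 = ftx x0 t0"
proof -
  have op: "open (UNIV \<times> {0::real<..})" by (intro open_Times) auto
  have ct1: "isCont (\<lambda>(x,t). fxt x t) (x0,t0)"
    using c1 op t0 continuous_on_eq_continuous_at by fastforce
  have ct2: "isCont (\<lambda>(x,t). ftx x t) (x0,t0)"
    using c2 op t0 continuous_on_eq_continuous_at by fastforce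
  have key: "\<bar>fxt x0 t0 - ftx x0 t0\<bar> < 2*e" if e: "e > 0" for e
  proof -
    obtain d1 where d1: "d1 > 0" "\<And>p. dist p (x0,t0) < d1 \<Longrightarrow> dist ((\<lambda>(x,t). fxt x t) p) (fxt x0 t0) < e"
      using ct1 e unfolding continuous_at_eps_delta by fastforce
    obtain d2 where d2: "d2 > 0" "\<And>p. dist p (x0,t0) < d2 \<Longrightarrow> dist ((\<lambda>(x,t). ftx x t) p) (ftx x0 t0) < e"
      using ct2 e unfolding continuous_at_eps_delta by fastforce
    define h where "h = min d1 d2 / 2"
    have h: "h > 0" "2*h \<le> d1" "2*h \<le> d2" using d1 d2 by (auto simp: h_def)
    have close: "dist (\<xi>, \<eta>) (x0, t0) < 2*h" if "x0 < \<xi>" "\<xi> < x0 + h" "t0 < \<eta>" "\<eta> < t0 + h" for \<xi> \<eta>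
    proof -
      have "dist (\<xi>, \<eta>) (x0, t0) = sqrt ((dist \<xi> x0)\<^sup>2 + (dist \<eta> t0)\<^sup>2)" by (simp add: dist_Pair_Pair)
      also have "\<dots> \<le> \<bar>dist \<xi> x0\<bar> + \<bar>dist \<eta> t0\<bar>" by (rule sqrt_sum_squares_le_sum_abs)
      also have "\<dots> < 2*h" using that by (auto simp: dist_real_def)
      finally show ?thesis .
    qed
    have "\<exists>z. x0 < z \<and> z < x0 + h \<and>
        (f (x0+h) (t0+h) - f (x0+h) t0) - (f x0 (t0+h) - f x0 t0) = ((x0+h) - x0) * (fx z (t0+h) - fx z t0)"
      using h t0 by (intro MVT2[where f="\<lambda>y. f y (t0+h) - f y t0"]) (auto intro!: DERIV_diff dfx)
    then obtain \<xi> where \<xi>: "x0 < \<xi>" "\<xi> < x0 + h"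
      and E1: "(f (x0+h) (t0+h) - f (x0+h) t0) - (f x0 (t0+h) - f x0 t0) = h * (fx \<xi> (t0+h) - fx \<xi> t0)"
      by auto
    have "\<exists>z. t0 < z \<and> z < t0 + h \<and> fx \<xi> (t0+h) - fx \<xi> t0 = ((t0+h) - t0) * fxt \<xi> z"
      using h t0 by (intro MVT2[where f="\<lambda>s. fx \<xi> s"]) (auto intro!: dfxt)
    then obtain \<eta> where \<eta>: "t0 < \<eta>" "\<eta> < t0 + h" and E2: "fx \<xi> (t0+h) - fx \<xi> t0 = h * fxt \<xi> \<eta>"
      by auto
    have "\<exists>z. t0 < z \<and> z < t0 + h \<and>
        (f (x0+h) (t0+h) - f x0 (t0+h)) - (f (x0+h) t0 - f x0 t0) = ((t0+h) - t0) * (ft (x0+h) z - ft x0 z)"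
      using h t0 by (intro MVT2[where f="\<lambda>s. f (x0+h) s - f x0 s"]) (auto intro!: DERIV_diff dft)
    then obtain \<eta>' where \<eta>': "t0 < \<eta>'" "\<eta>' < t0 + h"
      and E3: "(f (x0+h) (t0+h) - f x0 (t0+h)) - (f (x0+h) t0 - f x0 t0) = h * (ft (x0+h) \<eta>' - ft x0 \<eta>')"
      by auto
    have "\<exists>z. x0 < z \<and> z < x0 + h \<and> ft (x0+h) \<eta>' - ft x0 \<eta>' = ((x0+h) - x0) * ftx z \<eta>'"
      using h t0 \<eta>' by (intro MVT2[where f="\<lambda>y. ft y \<eta>'"]) (auto intro!: dftx)
    then obtain \<xi>' where \<xi>': "x0 < \<xi>'" "\<xi>' < x0 + h" and E4: "ft (x0+h) \<eta>' - ft x0 \<eta>' = h * ftx \<xi>' \<eta>'"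
      by auto
    have "h * (h * fxt \<xi> \<eta>) = h * (h * ftx \<xi>' \<eta>')"
      using E1 E2 E3 E4 by (simp add: algebra_simps)
    then have eq: "fxt \<xi> \<eta> = ftx \<xi>' \<eta>'" using h by simp
    have "dist (fxt \<xi> \<eta>) (fxt x0 t0) < e"
      using d1(2)[of "(\<xi>,\<eta>)"] close[OF \<xi> \<eta>] h by simp
    moreover have "dist (ftx \<xi>' \<eta>') (ftx x0 t0) < e"
      using d2(2)[of "(\<xi>',\<eta>')"] close[OF \<xi>' \<eta>'] h by simp
    ultimately show ?thesis using eq by (simp add: dist_real_def)
  qed
  show ?thesis
  proof (rule ccontr)
    assume "fxt x0 t0 \<noteq> ftx x0 t0"
    then have "\<bar>fxt x0 t0 - ftx x0 t0\<bar> / 2 > 0" by simp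
    from key[OF this] show False by simp
  qed
qed

lemma line_deriv:
  fixes u ux ut :: "real \<Rightarrow> real \<Rightarrow> real"
  assumes dux: "\<And>x t. t > 0 \<Longrightarrow> ((\<lambda>y. u y t) has_real_derivative ux x t) (at x)"
    and dut: "\<And>x t. t > 0 \<Longrightarrow> ((\<lambda>s. u x s) has_real_derivative ut x t) (at t)"
    and cux: "continuous_on (UNIV \<times> {0<..}) (\<lambda>(x,t). ux x t)"
    and t: "t > 0"
  shows "((\<lambda>\<tau>. u (y + k*\<tau>) \<tau>) has_real_derivative (ut (y+k*t) t + k * ux (y+k*t) t)) (at t)"
proof -
  define x where "x = y + k*t"
  have op: "open (UNIV \<times> {0::real<..})" by (intro open_Times) auto
  have op2: "open ({0::real<..} \<times> (UNIV::real set))" by (intro open_Times) auto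
  have ct: "isCont (\<lambda>(x,t). ux x t) (x,t)"
    using cux op t continuous_on_eq_continuous_at by fastforce
  have ct2: "isCont (\<lambda>p. (\<lambda>(x,t). ux x t) (snd p, fst p)) (t, x)"
    by (rule isCont_o2[where f="\<lambda>p. (snd p, fst p)"]) (use ct in \<open>auto intro!: continuous_intros\<close>)
  have "((\<lambda>(s, x). u x s) has_derivative
      (\<lambda>(ts, tx). (*) (ut x t) ts + blinfun_apply (blinfun_mult_right (ux x t)) tx)) (at (t, x) within {0<..} \<times> UNIV)"
  proof (rule has_derivative_partialsI[where f="\<lambda>s x. u x s"])
    show "((\<lambda>s. u x s) has_derivative (*) (ut x t)) (at t within {0<..})"
      using dut[OF t] unfolding has_field_derivative_def by (rule has_derivative_subset) simp
    show "((\<lambda>y. u y s) has_derivative blinfun_apply (blinfun_mult_right (ux y s))) (at y within UNIV)"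
      if "s \<in> {0<..}" "y \<in> UNIV" for s y
      using dux[where x=y and t=s] that by (simp add: has_field_derivative_def)
    show "continuous (at (t, x) within {0<..} \<times> UNIV) (\<lambda>(s, y). blinfun_mult_right (ux y s))"
    proof -
      have c3: "isCont (\<lambda>p. blinfun_mult_right ((\<lambda>p. (\<lambda>(x,t). ux x t) (snd p, fst p)) p)) (t, x)"
        by (rule isCont_o2[OF ct2 linear_continuous_at[OF bounded_linear_blinfun_mult_right]])
      show ?thesis
      proof (rule continuous_at_imp_continuous_at_within)
        have eq: "(\<lambda>(s,y). blinfun_mult_right (ux y s)) = (\<lambda>p. blinfun_mult_right ((\<lambda>p. (\<lambda>(x,t). ux x t) (snd p, fst p)) p))"
          by (simp add: fun_eq_iff split_beta)
        show "isCont (\<lambda>(s,y). blinfun_mult_right (ux y s)) (t, x)"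
          unfolding eq by (rule c3)
      qed
    qed
  qed (use t in auto)
  then have D: "((\<lambda>(s, x). u x s) has_derivative
      (\<lambda>(ts, tx). ut x t * ts + ux x t * tx)) (at (t, x))"
    using at_within_open[of "(t,x)" "{0<..} \<times> UNIV", OF _ op2] t by simp
  have "((\<lambda>\<tau>. y + k*\<tau>) has_derivative (\<lambda>h. k*h)) (at t)"
    by (rule has_derivative_eq_rhs[OF has_derivative_add[OF has_derivative_const
          has_derivative_mult_right[OF has_derivative_ident]]]) simp
  from has_derivative_Pair[OF has_derivative_ident this]
  have L: "((\<lambda>\<tau>. (\<tau>, y + k*\<tau>)) has_derivative (\<lambda>h. (h, k*h))) (at t)" .
  have "((\<lambda>(s, x). u x s) \<circ> (\<lambda>\<tau>. (\<tau>, y + k*\<tau>)) has_derivative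
      (\<lambda>(ts, tx). ut x t * ts + ux x t * tx) \<circ> (\<lambda>h. (h, k*h))) (at t)"
    by (rule diff_chain_at[OF L]) (simp add: x_def[symmetric] D)
  then have "((\<lambda>\<tau>. u (y + k*\<tau>) \<tau>) has_derivative (\<lambda>h. ut x t * h + ux x t * (k*h))) (at t)"
    by (simp add: o_def)
  then show ?thesis unfolding has_field_derivative_def x_def[symmetric]
    by (rule has_derivative_eq_rhs) (auto simp: fun_eq_iff algebra_simps)
qed



lemma is_solutionE:
  assumes "is_solution C g f"
  obtains fx ft fxx fxt ftx ftt where
    "\<And>x t. t > 0 \<Longrightarrow> ((\<lambda>y. f y t) has_real_derivative fx x t) (at x)"
    "\<And>x t. t > 0 \<Longrightarrow> ((\<lambda>s. f x s) has_real_derivative ft x t) (at t)"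
    "\<And>x t. t > 0 \<Longrightarrow> ((\<lambda>y. fx y t) has_real_derivative fxx x t) (at x)"
    "\<And>x t. t > 0 \<Longrightarrow> ((\<lambda>s. fx x s) has_real_derivative fxt x t) (at t)"
    "\<And>x t. t > 0 \<Longrightarrow> ((\<lambda>y. ft y t) has_real_derivative ftx x t) (at x)"
    "\<And>x t. t > 0 \<Longrightarrow> ((\<lambda>s. ft x s) has_real_derivative ftt x t) (at t)"
    "continuous_on (UNIV \<times> {0<..}) (\<lambda>(x,t). fx x t)"
    "continuous_on (UNIV \<times> {0<..}) (\<lambda>(x,t). fxx x t)"
    "continuous_on (UNIV \<times> {0<..}) (\<lambda>(x,t). fxt x t)"
    "continuous_on (UNIV \<times> {0<..}) (\<lambda>(x,t). ftx x t)"
    "continuous_on (UNIV \<times> {0<..}) (\<lambda>(x,t). ftt x t)"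
    "\<And>x. ((\<lambda>s. f x s) has_real_derivative ft x 0) (at_right 0)"
    "continuous_on (UNIV \<times> {0..}) (\<lambda>(x,t). f x t)"
    "continuous_on (UNIV \<times> {0..}) (\<lambda>(x,t). ft x t)"
    "\<And>x t. t > 0 \<Longrightarrow> ftt x t + C * fxt x t + C * ftx x t + C^2 * fxx x t - fxx x t = g x t"
    "\<And>x. f x 0 = 0" "\<And>x. ft x 0 = 0"
  using assms unfolding is_solution_def
  apply (elim exE conjE)
  subgoal premises P for fx ft fxx fxt ftx ftt
    apply (rule P(1)[of fx ft fxx fxt ftx ftt])
    using P(2-) apply blast+
    done
  done

lemma uniq:
  assumes s1: "is_solution C g f1" and s2: "is_solution C g f2" and t: "t \<ge> 0"
  shows "f1 x t = f2 x t"
proof -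
  obtain fx1 ft1 fxx1 fxt1 ftx1 ftt1 where
    a1: "\<And>x t. t > 0 \<Longrightarrow> ((\<lambda>y. f1 y t) has_real_derivative fx1 x t) (at x)"
    and b1: "\<And>x t. t > 0 \<Longrightarrow> ((\<lambda>s. f1 x s) has_real_derivative ft1 x t) (at t)"
    and c1: "\<And>x t. t > 0 \<Longrightarrow> ((\<lambda>y. fx1 y t) has_real_derivative fxx1 x t) (at x)"
    and d1: "\<And>x t. t > 0 \<Longrightarrow> ((\<lambda>s. fx1 x s) has_real_derivative fxt1 x t) (at t)"
    and e1: "\<And>x t. t > 0 \<Longrightarrow> ((\<lambda>y. ft1 y t) has_real_derivative ftx1 x t) (at x)"
    and f1': "\<And>x t. t > 0 \<Longrightarrow> ((\<lambda>s. ft1 x s) has_real_derivative ftt1 x t) (at t)"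
    and k1c: "continuous_on (UNIV \<times> {0<..}) (\<lambda>(x,t). fx1 x t)"
    and l1: "continuous_on (UNIV \<times> {0<..}) (\<lambda>(x,t). fxx1 x t)"
    and m1: "continuous_on (UNIV \<times> {0<..}) (\<lambda>(x,t). fxt1 x t)"
    and n1: "continuous_on (UNIV \<times> {0<..}) (\<lambda>(x,t). ftx1 x t)"
    and o1: "continuous_on (UNIV \<times> {0<..}) (\<lambda>(x,t). ftt1 x t)"
    and r1: "\<And>x. ((\<lambda>s. f1 x s) has_real_derivative ft1 x 0) (at_right 0)"
    and p1: "continuous_on (UNIV \<times> {0..}) (\<lambda>(x,t). f1 x t)"
    and pp1: "continuous_on (UNIV \<times> {0..}) (\<lambda>(x,t). ft1 x t)"
    and q1: "\<And>x t. t > 0 \<Longrightarrow> ftt1 x t + C * fxt1 x t + C * ftx1 x t + C^2 * fxx1 x t - fxx1 x t = g x t"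
    and z1: "\<And>x. f1 x 0 = 0" and zz1: "\<And>x. ft1 x 0 = 0"
    using is_solutionE[OF s1] by blast
  obtain fx2 ft2 fxx2 fxt2 ftx2 ftt2 where
    a2: "\<And>x t. t > 0 \<Longrightarrow> ((\<lambda>y. f2 y t) has_real_derivative fx2 x t) (at x)"
    and b2: "\<And>x t. t > 0 \<Longrightarrow> ((\<lambda>s. f2 x s) has_real_derivative ft2 x t) (at t)"
    and c2: "\<And>x t. t > 0 \<Longrightarrow> ((\<lambda>y. fx2 y t) has_real_derivative fxx2 x t) (at x)"
    and d2: "\<And>x t. t > 0 \<Longrightarrow> ((\<lambda>s. fx2 x s) has_real_derivative fxt2 x t) (at t)"
    and e2: "\<And>x t. t > 0 \<Longrightarrow> ((\<lambda>y. ft2 y t) has_real_derivative ftx2 x t) (at x)"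
    and f2': "\<And>x t. t > 0 \<Longrightarrow> ((\<lambda>s. ft2 x s) has_real_derivative ftt2 x t) (at t)"
    and k2c: "continuous_on (UNIV \<times> {0<..}) (\<lambda>(x,t). fx2 x t)"
    and l2: "continuous_on (UNIV \<times> {0<..}) (\<lambda>(x,t). fxx2 x t)"
    and m2: "continuous_on (UNIV \<times> {0<..}) (\<lambda>(x,t). fxt2 x t)"
    and n2: "continuous_on (UNIV \<times> {0<..}) (\<lambda>(x,t). ftx2 x t)"
    and o2: "continuous_on (UNIV \<times> {0<..}) (\<lambda>(x,t). ftt2 x t)"
    and r2: "\<And>x. ((\<lambda>s. f2 x s) has_real_derivative ft2 x 0) (at_right 0)"
    and p2: "continuous_on (UNIV \<times> {0..}) (\<lambda>(x,t). f2 x t)"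
    and pp2: "continuous_on (UNIV \<times> {0..}) (\<lambda>(x,t). ft2 x t)"
    and q2: "\<And>x t. t > 0 \<Longrightarrow> ftt2 x t + C * fxt2 x t + C * ftx2 x t + C^2 * fxx2 x t - fxx2 x t = g x t"
    and z2: "\<And>x. f2 x 0 = 0" and zz2: "\<And>x. ft2 x 0 = 0"
    using is_solutionE[OF s2] by blast
  have sw1: "fxt1 x t = ftx1 x t" if "t > 0" for x t
    by (rule schwarz[OF a1 b1 d1 e1 m1 n1 that])
  have sw2: "fxt2 x t = ftx2 x t" if "t > 0" for x t
    by (rule schwarz[OF a2 b2 d2 e2 m2 n2 that])
  define w where "w = (\<lambda>x t. f1 x t - f2 x t)"
  define wx where "wx = (\<lambda>x t. fx1 x t - fx2 x t)"
  define wt where "wt = (\<lambda>x t. ft1 x t - ft2 x t)"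
  define wxx where "wxx = (\<lambda>x t. fxx1 x t - fxx2 x t)"
  define wxt where "wxt = (\<lambda>x t. fxt1 x t - fxt2 x t)"
  define wtx where "wtx = (\<lambda>x t. ftx1 x t - ftx2 x t)"
  define wtt where "wtt = (\<lambda>x t. ftt1 x t - ftt2 x t)"
  define k1 where "k1 = C + 1"
  define k2 where "k2 = C - 1"
  have dwx: "((\<lambda>y. w y t) has_real_derivative wx x t) (at x)" if "t > 0" for x t
    unfolding w_def wx_def by (intro DERIV_diff a1 a2 that)
  have dwt: "((\<lambda>s. w x s) has_real_derivative wt x t) (at t)" if "t > 0" for x t
    unfolding w_def wt_def by (intro DERIV_diff b1 b2 that)
  have cwx: "continuous_on (UNIV \<times> {0<..}) (\<lambda>(x,t). wx x t)"
    using k1c k2c unfolding wx_def by (simp add: split_beta continuous_on_diff)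
  have cw: "continuous_on (UNIV \<times> {0..}) (\<lambda>(x,t). w x t)"
    using p1 p2 unfolding w_def by (simp add: split_beta continuous_on_diff)
  define z where "z = (\<lambda>x t. wt x t + k1 * wx x t)"
  define zx where "zx = (\<lambda>x t. wtx x t + k1 * wxx x t)"
  define zt where "zt = (\<lambda>x t. wtt x t + k1 * wxt x t)"
  have dzx: "((\<lambda>y. z y t) has_real_derivative zx x t) (at x)" if "t > 0" for x t
    unfolding z_def zx_def wt_def wx_def wtx_def wxx_def
    by (intro DERIV_add DERIV_diff DERIV_cmult a1 a2 c1 c2 e1 e2 that)
  have dzt: "((\<lambda>s. z x s) has_real_derivative zt x t) (at t)" if "t > 0" for x t
    unfolding z_def zt_def wt_def wx_def wtt_def wxt_def
    by (intro DERIV_add DERIV_diff DERIV_cmult d1 d2 f1' f2' that)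
  have czx: "continuous_on (UNIV \<times> {0<..}) (\<lambda>(x,t). zx x t)"
    using n1 n2 l1 l2 unfolding zx_def wtx_def wxx_def
    by (simp add: split_beta continuous_on_diff continuous_on_add continuous_on_mult_left)
  have zero: "zt x t + k2 * zx x t = 0" if "t > 0" for x t
  proof -
    have "zt x t + k2 * zx x t = (ftt1 x t + C * fxt1 x t + C * ftx1 x t + C^2 * fxx1 x t - fxx1 x t)
       - (ftt2 x t + C * fxt2 x t + C * ftx2 x t + C^2 * fxx2 x t - fxx2 x t)
       + (fxt1 x t - ftx1 x t) - (fxt2 x t - ftx2 x t)"
      unfolding zt_def zx_def k1_def k2_def wtt_def wxt_def wtx_def wxx_def
      by (simp add: algebra_simps power2_eq_square)
    then show ?thesis using q1[OF that] q2[OF that] sw1[OF that] sw2[OF that] by simp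
  qed
  define c where "c = (\<lambda>u. z (u + k2) 1)"
  have zc: "z x t = c (x - k2 * t)" if "t > 0" for x t
  proof -
    define \<phi> where "\<phi> = (\<lambda>\<tau>. z (x - k2 * t + k2 * \<tau>) \<tau>)"
    have "\<phi> t = \<phi> 1"
    proof (rule DERIV_isconst3[where a=0 and b="max t 1 + 1" and f=\<phi> and x=t and y=1])
      fix \<tau> assume "\<tau> \<in> {0<..<max t 1 + 1}"
      then have \<tau>: "\<tau> > 0" by simp
      have "((\<lambda>\<tau>. z (x - k2 * t + k2 * \<tau>) \<tau>) has_real_derivative
          zt (x - k2 * t + k2 * \<tau>) \<tau> + k2 * zx (x - k2 * t + k2 * \<tau>) \<tau>) (at \<tau>)"
        by (rule line_deriv[OF dzx dzt czx \<tau>])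
      then show "DERIV \<phi> \<tau> :> 0" unfolding \<phi>_def using zero[OF \<tau>] by simp
    qed (use that in auto)
    then show ?thesis unfolding \<phi>_def c_def by (simp add: algebra_simps)
  qed
  have cc: "continuous_on UNIV c"
  proof -
    have "isCont c u" for u
    proof -
      have "isCont (\<lambda>y. z y 1) (u + k2)" using DERIV_isCont[OF dzx[of 1 "u + k2"]] by simp
      then show ?thesis unfolding c_def
        by (rule isCont_o2[rotated]) (auto intro!: continuous_intros)
    qed
    then show ?thesis by (simp add: continuous_at_imp_continuous_on)
  qed
  obtain Cc where dCc: "\<And>u. (Cc has_real_derivative c u) (at u)"
  proof -
    have "\<exists>F. \<forall>x::real. (-\<infinity>::ereal) < x \<longrightarrow> x < \<infinity> \<longrightarrow> (F has_vector_derivative c x) (at x)"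
      by (rule einterval_antiderivative) (use cc in \<open>auto simp: continuous_on_eq_continuous_at\<close>)
    then show ?thesis using that by (auto simp: has_real_derivative_iff_has_vector_derivative)
  qed
  have cCc: "continuous_on UNIV Cc"
    using dCc by (meson DERIV_continuous continuous_at_imp_continuous_on)
  have rep: "w x t = (Cc (x - k2 * t) - Cc (x - k1 * t)) / 2" if "t \<ge> 0" for x t
  proof (cases "t = 0")
    case True
    then show ?thesis by (simp add: w_def z1 z2)
  next
    case False
    then have tp: "t > 0" using that by simp
    define y where "y = x - k1 * t"
    define gf where "gf = (\<lambda>\<tau>. w (y + k1 * \<tau>) \<tau> - (Cc (y + 2 * \<tau>) - Cc y) / 2)"
    have "gf t = gf 0"
    proof (rule DERIV_isconst_end[OF tp])
      have "continuous_on {0..t} (\<lambda>\<tau>. (\<lambda>(x,t). w x t) (y + k1 * \<tau>, \<tau>))"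
        by (rule continuous_on_compose2[OF cw]) (auto intro!: continuous_intros)
      moreover have "continuous_on {0..t} (\<lambda>\<tau>. Cc (y + 2 * \<tau>))"
        by (rule continuous_on_compose2[OF cCc]) (auto intro!: continuous_intros)
      ultimately show "continuous_on {0..t} gf" unfolding gf_def
        by (auto intro!: continuous_intros)
    next
      fix \<tau> assume \<tau>: "0 < \<tau>" "\<tau> < t"
      have A: "((\<lambda>\<tau>. w (y + k1 * \<tau>) \<tau>) has_real_derivative
          wt (y + k1 * \<tau>) \<tau> + k1 * wx (y + k1 * \<tau>) \<tau>) (at \<tau>)"
        by (rule line_deriv[OF dwx dwt cwx \<tau>(1)])
      have "wt (y + k1 * \<tau>) \<tau> + k1 * wx (y + k1 * \<tau>) \<tau> = c (y + 2 * \<tau>)"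
        using zc[OF \<tau>(1), of "y + k1 * \<tau>"] unfolding z_def k1_def k2_def
        by (simp add: algebra_simps)
      with A have A': "((\<lambda>\<tau>. w (y + k1 * \<tau>) \<tau>) has_real_derivative c (y + 2 * \<tau>)) (at \<tau>)" by simp
      have B: "((\<lambda>\<tau>. Cc (y + 2 * \<tau>)) has_real_derivative c (y + 2 * \<tau>) * 2) (at \<tau>)"
        by (rule DERIV_chain2[OF dCc]) (auto intro!: derivative_eq_intros)
      have B2: "((\<lambda>\<tau>. (Cc (y + 2 * \<tau>) - Cc y) / 2) has_real_derivative (c (y + 2 * \<tau>) * 2 - 0) / 2) (at \<tau>)"
        by (rule DERIV_cdivide[OF DERIV_diff[OF B DERIV_const]])
      have "(gf has_real_derivative c (y + 2 * \<tau>) - (c (y + 2 * \<tau>) * 2 - 0) / 2) (at \<tau>)"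
        unfolding gf_def by (rule DERIV_diff[OF A' B2])
      then show "DERIV gf \<tau> :> 0" by simp
    qed
    then have "w x t - (Cc (x - k2 * t) - Cc (x - k1 * t)) / 2 = 0"
      unfolding gf_def y_def k1_def k2_def by (simp add: w_def z1 z2 algebra_simps)
    then show ?thesis by simp
  qed
  have c0: "c x = 0" for x
  proof -
    have W: "((\<lambda>s. w x s) has_real_derivative 0) (at_right 0)"
      using DERIV_diff[OF r1 r2] unfolding w_def by (simp add: zz1 zz2)
    have "((\<lambda>s. (Cc (x - k2 * s) - Cc (x - k1 * s)) / 2) has_real_derivative
        (c (x - k2 * 0) * (- k2) - c (x - k1 * 0) * (- k1)) / 2) (at 0)"
    proof (rule DERIV_cdivide, rule DERIV_diff)
      show "((\<lambda>s. Cc (x - k2 * s)) has_real_derivative c (x - k2 * 0) * - k2) (at 0)"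
        by (rule DERIV_chain2[OF dCc]) (auto intro!: derivative_eq_intros)
      show "((\<lambda>s. Cc (x - k1 * s)) has_real_derivative c (x - k1 * 0) * - k1) (at 0)"
        by (rule DERIV_chain2[OF dCc]) (auto intro!: derivative_eq_intros)
    qed
    then have R: "((\<lambda>s. (Cc (x - k2 * s) - Cc (x - k1 * s)) / 2) has_real_derivative c x) (at_right 0)"
      unfolding k1_def k2_def by (auto simp: algebra_simps intro: has_field_derivative_at_within)
    have ev: "eventually (\<lambda>s. (w x s - w x 0) / (s - 0) =
        ((Cc (x - k2 * s) - Cc (x - k1 * s)) / 2 - (Cc (x - k2 * 0) - Cc (x - k1 * 0)) / 2) / (s - 0)) (at_right 0)"
    proof -
      have "eventually (\<lambda>s. s > (0::real)) (at_right 0)" by (simp add: eventually_at_filter)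
      then show ?thesis by eventually_elim (simp add: rep)
    qed
    have L1: "((\<lambda>s. (w x s - w x 0) / (s - 0)) \<longlongrightarrow> 0) (at_right 0)"
      using W by (simp add: has_field_derivative_iff)
    have L2: "((\<lambda>s. (w x s - w x 0) / (s - 0)) \<longlongrightarrow> c x) (at_right 0)"
      using R unfolding has_field_derivative_iff by (rule Lim_transform_eventually[OF _ ev[THEN eventually_mono]]) auto
    show ?thesis using tendsto_unique[OF _ L2 L1] by simp
  qed
  have "Cc u = Cc v" for u v
    by (rule DERIV_isconst_all) (use dCc c0 in auto)
  then have "Cc (x - k2 * t) = Cc (x - k1 * t)" by blast
  then show ?thesis using rep[OF t, of x] unfolding w_def by simp
qed



lemma deriv_zero_left:
  fixes f :: "real \<Rightarrow> real"
  assumes d: "(f has_real_derivative D) (at t)" and t: "t \<le> 0" and z: "\<And>s. s \<le> 0 \<Longrightarrow> f s = 0"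
  shows "D = 0"
proof -
  have L1: "((\<lambda>y. (f y - f t) / (y - t)) \<longlongrightarrow> D) (at_left t)"
    using has_field_derivative_at_within[OF d, of "{..<t}"] by (simp add: has_field_derivative_iff)
  have "eventually (\<lambda>y. y < t) (at_left t)" by (simp add: eventually_at_filter)
  then have "eventually (\<lambda>y. 0 = (f y - f t) / (y - t)) (at_left t)"
    by eventually_elim (use t in \<open>simp add: z\<close>)
  then have L2: "((\<lambda>y. (f y - f t) / (y - t)) \<longlongrightarrow> 0) (at_left t)"
    by (rule Lim_transform_eventually[OF tendsto_const])
  show ?thesis using tendsto_unique[OF _ L1 L2] by simp
qed

lemma S2_prod:
  fixes a a1 a2 b b1 b2 :: "real \<Rightarrow> real"
  assumes da: "\<And>t. (a has_real_derivative deriv a t) (at t)"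
    and da1: "\<And>t. (deriv a has_real_derivative deriv (deriv a) t) (at t)"
    and db: "\<And>t. (b has_real_derivative deriv b t) (at t)"
    and db1: "\<And>t. (deriv b has_real_derivative deriv (deriv b) t) (at t)"
  shows "S2 C (\<lambda>x t. a t * b x) x t = deriv (deriv a) t * b x + 2*C*(deriv a t * deriv b x)
     + C^2 * (a t * deriv (deriv b) x)"
proof -
  have e1: "(\<lambda>s. deriv (\<lambda>s'. a s' * b x) s) = (\<lambda>s. deriv a s * b x)"
    by (rule ext, rule DERIV_imp_deriv, rule DERIV_cmult_right[OF da])
  have e2: "(\<lambda>s. deriv (\<lambda>y. a s * b y) x) = (\<lambda>s. a s * deriv b x)"
    by (rule ext, rule DERIV_imp_deriv, rule DERIV_cmult[OF db])
  have e3: "(\<lambda>y. deriv (\<lambda>s. a s * b y) t) = (\<lambda>y. deriv a t * b y)"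
    by (rule ext, rule DERIV_imp_deriv, rule DERIV_cmult_right[OF da])
  have e4: "(\<lambda>y. deriv (\<lambda>y'. a t * b y') y) = (\<lambda>y. a t * deriv b y)"
    by (rule ext, rule DERIV_imp_deriv, rule DERIV_cmult[OF db])
  have f1: "deriv (\<lambda>s. deriv a s * b x) t = deriv (deriv a) t * b x"
    by (rule DERIV_imp_deriv, rule DERIV_cmult_right[OF da1])
  have f2: "deriv (\<lambda>s. a s * deriv b x) t = deriv a t * deriv b x"
    by (rule DERIV_imp_deriv, rule DERIV_cmult_right[OF da])
  have f3: "deriv (\<lambda>y. deriv a t * b y) x = deriv a t * deriv b x"
    by (rule DERIV_imp_deriv, rule DERIV_cmult[OF db])
  have f4: "deriv (\<lambda>y. a t * deriv b y) x = a t * deriv (deriv b) x"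
    by (rule DERIV_imp_deriv, rule DERIV_cmult[OF db1])
  show ?thesis unfolding S2_def e1 e2 e3 e4 f1 f2 f3 f4 by (simp add: algebra_simps)
qed

lemma is_solutionI:
  assumes
    "\<And>x t. t > 0 \<Longrightarrow> ((\<lambda>y. f y t) has_real_derivative fx x t) (at x)"
    "\<And>x t. t > 0 \<Longrightarrow> ((\<lambda>s. f x s) has_real_derivative ft x t) (at t)"
    "\<And>x t. t > 0 \<Longrightarrow> ((\<lambda>y. fx y t) has_real_derivative fxx x t) (at x)"
    "\<And>x t. t > 0 \<Longrightarrow> ((\<lambda>s. fx x s) has_real_derivative fxt x t) (at t)"
    "\<And>x t. t > 0 \<Longrightarrow> ((\<lambda>y. ft y t) has_real_derivative ftx x t) (at x)"
    "\<And>x t. t > 0 \<Longrightarrow> ((\<lambda>s. ft x s) has_real_derivative ftt x t) (at t)"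
    "continuous_on (UNIV \<times> {0<..}) (\<lambda>(x,t). fx x t)"
    "continuous_on (UNIV \<times> {0<..}) (\<lambda>(x,t). fxx x t)"
    "continuous_on (UNIV \<times> {0<..}) (\<lambda>(x,t). fxt x t)"
    "continuous_on (UNIV \<times> {0<..}) (\<lambda>(x,t). ftx x t)"
    "continuous_on (UNIV \<times> {0<..}) (\<lambda>(x,t). ftt x t)"
    "\<And>x. ((\<lambda>s. f x s) has_real_derivative ft x 0) (at_right 0)"
    "continuous_on (UNIV \<times> {0..}) (\<lambda>(x,t). f x t)"
    "continuous_on (UNIV \<times> {0..}) (\<lambda>(x,t). ft x t)"
    "\<And>x t. t > 0 \<Longrightarrow> ftt x t + C * fxt x t + C * ftx x t + C^2 * fxx x t - fxx x t = g x t"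
    "\<And>x. f x 0 = 0" "\<And>x. ft x 0 = 0"
  shows "is_solution C g f"
  unfolding is_solution_def
  apply (rule exI[where x=fx], rule exI[where x=ft], rule exI[where x=fxx], rule exI[where x=fxt],
      rule exI[where x=ftx], rule exI[where x=ftt])
  using assms by blast

lemma is_solution_transfer:
  assumes s: "is_solution C g G" and e: "\<And>x t. t \<ge> 0 \<Longrightarrow> F x t = G x t"
  shows "is_solution C g F"
proof -
  obtain fx ft fxx fxt ftx ftt where
    a: "\<And>x t. t > 0 \<Longrightarrow> ((\<lambda>y. G y t) has_real_derivative fx x t) (at x)"
    and b: "\<And>x t. t > 0 \<Longrightarrow> ((\<lambda>s. G x s) has_real_derivative ft x t) (at t)"
    and c: "\<And>x t. t > 0 \<Longrightarrow> ((\<lambda>y. fx y t) has_real_derivative fxx x t) (at x)"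
    and d: "\<And>x t. t > 0 \<Longrightarrow> ((\<lambda>s. fx x s) has_real_derivative fxt x t) (at t)"
    and e1: "\<And>x t. t > 0 \<Longrightarrow> ((\<lambda>y. ft y t) has_real_derivative ftx x t) (at x)"
    and f: "\<And>x t. t > 0 \<Longrightarrow> ((\<lambda>s. ft x s) has_real_derivative ftt x t) (at t)"
    and k: "continuous_on (UNIV \<times> {0<..}) (\<lambda>(x,t). fx x t)"
    and l: "continuous_on (UNIV \<times> {0<..}) (\<lambda>(x,t). fxx x t)"
    and m: "continuous_on (UNIV \<times> {0<..}) (\<lambda>(x,t). fxt x t)"
    and n: "continuous_on (UNIV \<times> {0<..}) (\<lambda>(x,t). ftx x t)"
    and o: "continuous_on (UNIV \<times> {0<..}) (\<lambda>(x,t). ftt x t)"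
    and r: "\<And>x. ((\<lambda>s. G x s) has_real_derivative ft x 0) (at_right 0)"
    and p: "continuous_on (UNIV \<times> {0..}) (\<lambda>(x,t). G x t)"
    and pp: "continuous_on (UNIV \<times> {0..}) (\<lambda>(x,t). ft x t)"
    and q: "\<And>x t. t > 0 \<Longrightarrow> ftt x t + C * fxt x t + C * ftx x t + C^2 * fxx x t - fxx x t = g x t"
    and z: "\<And>x. G x 0 = 0" and zz: "\<And>x. ft x 0 = 0"
    using is_solutionE[OF s] by blast
  show ?thesis
  proof (rule is_solutionI[where fx=fx and ft=ft and fxx=fxx and fxt=fxt and ftx=ftx and ftt=ftt])
    fix x t :: real assume t: "t > 0"
    have "(\<lambda>y. F y t) = (\<lambda>y. G y t)" using e t by auto
    then show "((\<lambda>y. F y t) has_real_derivative fx x t) (at x)" using a[OF t] by simp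
    show "((\<lambda>s. F x s) has_real_derivative ft x t) (at t)"
      by (rule has_field_derivative_transform_within_open[OF b[OF t], where S="{0<..}"])
        (use t e in auto)
  next
    fix x
    have ev: "eventually (\<lambda>s. (G x s - G x 0) / (s - 0) = (F x s - F x 0) / (s - 0)) (at_right 0)"
    proof -
      have "eventually (\<lambda>s. s > (0::real)) (at_right 0)" by (simp add: eventually_at_filter)
      then show ?thesis by eventually_elim (simp add: e)
    qed
    show "((\<lambda>s. F x s) has_real_derivative ft x 0) (at_right 0)"
      using r[of x] unfolding has_field_derivative_iff by (rule Lim_transform_eventually[OF _ ev])
  next
    show "continuous_on (UNIV \<times> {0..}) (\<lambda>(x,t). F x t)"
      using p by (rule continuous_on_eq) (auto simp: e)
  next
    fix x show "F x 0 = 0" using e[of 0 x] z by simp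
  qed (use c d e1 f k l m n o pp q zz in auto)
qed



lemma alg_id:
  fixes C A Vp Vm A2b abb :: real
  assumes k1: "C + 1 \<noteq> 0" and k2: "C - 1 \<noteq> 0"
  shows "(A2b + 1/2 * ((A - (C-1)*Vm) - (A - (C+1)*Vp)))
     + C * (A + 1/2 * ((A - (A - (C-1)*Vm))/(C-1) - (A - (A - (C+1)*Vp))/(C+1)))
     + C * (A + 1/2 * (Vm - Vp))
     + C^2 * (abb + 1/2 * ((abb - Vm)/(C-1) - (abb - Vp)/(C+1)))
     - (abb + 1/2 * ((abb - Vm)/(C-1) - (abb - Vp)/(C+1)))
   = A2b + 2*C*A + C^2*abb"
proof -
  have e1: "(A - (A - (C-1)*Vm))/(C-1) = Vm" using k2 by simp
  have e2: "(A - (A - (C+1)*Vp))/(C+1) = Vp" using k1 by simp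
  define p where "p = (abb - Vm)/(C-1)"
  define q where "q = (abb - Vp)/(C+1)"
  have Vm: "Vm = abb - (C-1)*p" using k2 unfolding p_def by simp
  have Vp: "Vp = abb - (C+1)*q" using k1 unfolding q_def by simp
  show ?thesis
    unfolding e1 e2 p_def[symmetric] q_def[symmetric] unfolding Vp Vm
    by (simp add: field_simps power2_eq_square)
qed

lemma existence:
  fixes a a1 a2 b b1 b2 :: "real \<Rightarrow> real"
  assumes da: "\<And>t. (a has_real_derivative a1 t) (at t)"
    and da1: "\<And>t. (a1 has_real_derivative a2 t) (at t)"
    and ca2: "continuous_on UNIV a2"
    and db: "\<And>t. (b has_real_derivative b1 t) (at t)"
    and db1: "\<And>t. (b1 has_real_derivative b2 t) (at t)"
    and cb2: "continuous_on UNIV b2"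
    and za: "\<And>t. t \<le> 0 \<Longrightarrow> a t = 0"
    and za1: "\<And>t. t \<le> 0 \<Longrightarrow> a1 t = 0"
    and za2: "\<And>t. t \<le> 0 \<Longrightarrow> a2 t = 0"
    and hC: "\<bar>C\<bar> \<noteq> 1"
  shows "is_solution C (\<lambda>x t. a2 t * b x + 2*C*(a1 t * b1 x) + C^2*(a t * b2 x))
     (\<lambda>x t. a t * b x + 1/2 * (conv a b1 (C-1) x t - conv a b1 (C+1) x t))"
proof -
  have ca: "continuous_on UNIV a" using da by (meson DERIV_continuous continuous_at_imp_continuous_on)
  have ca1: "continuous_on UNIV a1" using da1 by (meson DERIV_continuous continuous_at_imp_continuous_on)
  have cb: "continuous_on UNIV b" using db by (meson DERIV_continuous continuous_at_imp_continuous_on)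
  have cb1: "continuous_on UNIV b1" using db1 by (meson DERIV_continuous continuous_at_imp_continuous_on)
  define k1 where "k1 = C + 1"
  define k2 where "k2 = C - 1"
  have k1: "k1 \<noteq> 0" and k2: "k2 \<noteq> 0" using hC by (auto simp: k1_def k2_def)
  define Px where "Px = (\<lambda>k x t. (a t * b1 x - conv a1 b1 k x t) / k)"
  define Pxx where "Pxx = (\<lambda>k x t. (a t * b2 x - conv a1 b2 k x t) / k)"
  define Pxt where "Pxt = (\<lambda>k x t. (a1 t * b1 x - conv a2 b1 k x t) / k)"
  have dP_x: "((\<lambda>y. conv a b1 k y t) has_real_derivative Px k x t) (at x)" if "k \<noteq> 0" for k x t
  proof -
    have "k * conv a b2 k x t + conv a1 b1 k x t = a t * b1 x"
      by (rule conv_ibp[OF da ca1 db1 cb2 za])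
    then have "conv a b2 k x t = Px k x t" unfolding Px_def using that by (simp add: field_simps)
    with conv_dx[OF ca cb2 db1, of k t x] show ?thesis by simp
  qed
  have dP_t: "((\<lambda>s. conv a b1 k x s) has_real_derivative conv a1 b1 k x t) (at t)" for k x t
    by (rule conv_dt[OF cb1 ca1 da za za1])
  have dPx_x: "((\<lambda>y. Px k y t) has_real_derivative Pxx k x t) (at x)" for k x t
    unfolding Px_def Pxx_def
    by (intro DERIV_cdivide DERIV_diff DERIV_cmult db1 conv_dx[OF ca1 cb2 db1])
  have dPx_t: "((\<lambda>s. Px k x s) has_real_derivative Pxt k x t) (at t)" for k x t
    unfolding Px_def Pxt_def
    by (intro DERIV_cdivide DERIV_diff DERIV_cmult_right da conv_dt[OF cb1 ca2 da1 za1 za2])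
  have dPt_x: "((\<lambda>y. conv a1 b1 k y t) has_real_derivative conv a1 b2 k x t) (at x)" for k x t
    by (rule conv_dx[OF ca1 cb2 db1])
  have dPt_t: "((\<lambda>s. conv a1 b1 k x s) has_real_derivative conv a2 b1 k x t) (at t)" for k x t
    by (rule conv_dt[OF cb1 ca2 da1 za1 za2])
  have idn: "k * conv a1 b2 k x t + conv a2 b1 k x t = a1 t * b1 x" for k x t
    by (rule conv_ibp[OF da1 ca2 db1 cb2 za1])
  have cc1: "continuous_on UNIV (\<lambda>p. conv a b1 k (fst p) (snd p))" for k
    using conv_cont[OF ca cb1 za, of k] by (simp add: split_beta)
  have cc2: "continuous_on UNIV (\<lambda>p. conv a1 b1 k (fst p) (snd p))" for k
    using conv_cont[OF ca1 cb1 za1, of k] by (simp add: split_beta)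
  have cc3: "continuous_on UNIV (\<lambda>p. conv a1 b2 k (fst p) (snd p))" for k
    using conv_cont[OF ca1 cb2 za1, of k] by (simp add: split_beta)
  have cc4: "continuous_on UNIV (\<lambda>p. conv a2 b1 k (fst p) (snd p))" for k
    using conv_cont[OF ca2 cb1 za2, of k] by (simp add: split_beta)
  have cs: "continuous_on UNIV (\<lambda>p. a (snd p))" "continuous_on UNIV (\<lambda>p. a1 (snd p))"
    "continuous_on UNIV (\<lambda>p. a2 (snd p))" "continuous_on UNIV (\<lambda>p. b (fst p))"
    "continuous_on UNIV (\<lambda>p::real\<times>real. b1 (fst p))" "continuous_on UNIV (\<lambda>p::real\<times>real. b2 (fst p))"
    by (auto intro!: continuous_intros continuous_on_compose2[OF ca] continuous_on_compose2[OF ca1]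
      continuous_on_compose2[OF ca2] continuous_on_compose2[OF cb] continuous_on_compose2[OF cb1]
      continuous_on_compose2[OF cb2])
  have cU: "continuous_on S f" if "continuous_on UNIV f" for S and f :: "real \<times> real \<Rightarrow> real"
    using that continuous_on_subset by blast
  show ?thesis
  proof (rule is_solutionI[where
        fx="\<lambda>x t. a t * b1 x + 1/2 * (Px k2 x t - Px k1 x t)"
    and ft="\<lambda>x t. a1 t * b x + 1/2 * (conv a1 b1 k2 x t - conv a1 b1 k1 x t)"
    and fxx="\<lambda>x t. a t * b2 x + 1/2 * (Pxx k2 x t - Pxx k1 x t)"
    and fxt="\<lambda>x t. a1 t * b1 x + 1/2 * (Pxt k2 x t - Pxt k1 x t)"
    and ftx="\<lambda>x t. a1 t * b1 x + 1/2 * (conv a1 b2 k2 x t - conv a1 b2 k1 x t)"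
    and ftt="\<lambda>x t. a2 t * b x + 1/2 * (conv a2 b1 k2 x t - conv a2 b1 k1 x t)"])
    fix x t :: real
    show "((\<lambda>y. a t * b y + 1/2 * (conv a b1 (C-1) y t - conv a b1 (C+1) y t)) has_real_derivative
        a t * b1 x + 1/2 * (Px k2 x t - Px k1 x t)) (at x)"
      unfolding k1_def[symmetric] k2_def[symmetric]
      by (intro DERIV_add DERIV_cmult DERIV_diff db dP_x k1 k2)
    show "((\<lambda>s. a s * b x + 1/2 * (conv a b1 (C-1) x s - conv a b1 (C+1) x s)) has_real_derivative
        a1 t * b x + 1/2 * (conv a1 b1 k2 x t - conv a1 b1 k1 x t)) (at t)"
      unfolding k1_def[symmetric] k2_def[symmetric]
      by (intro DERIV_add DERIV_cmult DERIV_cmult_right DERIV_diff da dP_t)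
    show "((\<lambda>y. a t * b1 y + 1/2 * (Px k2 y t - Px k1 y t)) has_real_derivative
        a t * b2 x + 1/2 * (Pxx k2 x t - Pxx k1 x t)) (at x)"
      by (intro DERIV_add DERIV_cmult DERIV_diff db1 dPx_x)
    show "((\<lambda>s. a s * b1 x + 1/2 * (Px k2 x s - Px k1 x s)) has_real_derivative
        a1 t * b1 x + 1/2 * (Pxt k2 x t - Pxt k1 x t)) (at t)"
      by (intro DERIV_add DERIV_cmult DERIV_cmult_right DERIV_diff da dPx_t)
    show "((\<lambda>y. a1 t * b y + 1/2 * (conv a1 b1 k2 y t - conv a1 b1 k1 y t)) has_real_derivative
        a1 t * b1 x + 1/2 * (conv a1 b2 k2 x t - conv a1 b2 k1 x t)) (at x)"
      by (intro DERIV_add DERIV_cmult DERIV_diff db dPt_x)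
    show "((\<lambda>s. a1 s * b x + 1/2 * (conv a1 b1 k2 x s - conv a1 b1 k1 x s)) has_real_derivative
        a2 t * b x + 1/2 * (conv a2 b1 k2 x t - conv a2 b1 k1 x t)) (at t)"
      by (intro DERIV_add DERIV_cmult DERIV_cmult_right DERIV_diff da1 dPt_t)
    show "(a2 t * b x + 1/2 * (conv a2 b1 k2 x t - conv a2 b1 k1 x t))
        + C * (a1 t * b1 x + 1/2 * (Pxt k2 x t - Pxt k1 x t))
        + C * (a1 t * b1 x + 1/2 * (conv a1 b2 k2 x t - conv a1 b2 k1 x t))
        + C^2 * (a t * b2 x + 1/2 * (Pxx k2 x t - Pxx k1 x t))
        - (a t * b2 x + 1/2 * (Pxx k2 x t - Pxx k1 x t))
        = a2 t * b x + 2*C*(a1 t * b1 x) + C^2*(a t * b2 x)"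
    proof -
      have u1: "conv a2 b1 k1 x t = a1 t * b1 x - (C+1) * conv a1 b2 k1 x t"
        using idn[of k1 x t] unfolding k1_def by simp
      have u2: "conv a2 b1 k2 x t = a1 t * b1 x - (C-1) * conv a1 b2 k2 x t"
        using idn[of k2 x t] unfolding k2_def by simp
      show ?thesis
        unfolding Pxt_def Pxx_def u1 u2 unfolding k1_def k2_def
        using alg_id[where C=C and A="a1 t * b1 x" and Vp="conv a1 b2 (C+1) x t" and Vm="conv a1 b2 (C-1) x t"
            and A2b="a2 t * b x" and abb="a t * b2 x"] k1 k2 unfolding k1_def k2_def
        by simp
    qed
  next
    fix x
    have "((\<lambda>s. a s * b x + 1/2 * (conv a b1 (C-1) x s - conv a b1 (C+1) x s)) has_real_derivative
        a1 0 * b x + 1/2 * (conv a1 b1 k2 x 0 - conv a1 b1 k1 x 0)) (at 0)"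
      unfolding k1_def[symmetric] k2_def[symmetric]
      by (intro DERIV_add DERIV_cmult DERIV_cmult_right DERIV_diff da dP_t)
    then show "((\<lambda>s. a s * b x + 1/2 * (conv a b1 (C-1) x s - conv a b1 (C+1) x s)) has_real_derivative
        a1 0 * b x + 1/2 * (conv a1 b1 k2 x 0 - conv a1 b1 k1 x 0)) (at_right 0)"
      by (rule has_field_derivative_at_within)
    show "a 0 * b x + 1/2 * (conv a b1 (C-1) x 0 - conv a b1 (C+1) x 0) = 0"
      by (simp add: conv_def za)
    show "a1 0 * b x + 1/2 * (conv a1 b1 k2 x 0 - conv a1 b1 k1 x 0) = 0"
      by (simp add: conv_def za1)
  next
    show "continuous_on (UNIV \<times> {0<..}) (\<lambda>(x,t). a t * b1 x + 1/2 * (Px k2 x t - Px k1 x t))"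
      unfolding Px_def split_beta by (rule cU, intro continuous_intros cs cc1 cc2 cc3 cc4) (use k1 k2 in auto)
    show "continuous_on (UNIV \<times> {0<..}) (\<lambda>(x,t). a t * b2 x + 1/2 * (Pxx k2 x t - Pxx k1 x t))"
      unfolding Pxx_def split_beta by (rule cU, intro continuous_intros cs cc1 cc2 cc3 cc4) (use k1 k2 in auto)
    show "continuous_on (UNIV \<times> {0<..}) (\<lambda>(x,t). a1 t * b1 x + 1/2 * (Pxt k2 x t - Pxt k1 x t))"
      unfolding Pxt_def split_beta by (rule cU, intro continuous_intros cs cc1 cc2 cc3 cc4) (use k1 k2 in auto)
    show "continuous_on (UNIV \<times> {0<..}) (\<lambda>(x,t). a1 t * b1 x + 1/2 * (conv a1 b2 k2 x t - conv a1 b2 k1 x t))"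
      unfolding split_beta by (rule cU, intro continuous_intros cs cc1 cc2 cc3 cc4)
    show "continuous_on (UNIV \<times> {0<..}) (\<lambda>(x,t). a2 t * b x + 1/2 * (conv a2 b1 k2 x t - conv a2 b1 k1 x t))"
      unfolding split_beta by (rule cU, intro continuous_intros cs cc1 cc2 cc3 cc4)
    show "continuous_on (UNIV \<times> {0..}) (\<lambda>(x,t). a t * b x + 1/2 * (conv a b1 (C-1) x t - conv a b1 (C+1) x t))"
      unfolding split_beta by (rule cU, intro continuous_intros cs cc1 cc2 cc3 cc4)
    show "continuous_on (UNIV \<times> {0..}) (\<lambda>(x,t). a1 t * b x + 1/2 * (conv a1 b1 k2 x t - conv a1 b1 k1 x t))"
      unfolding split_beta by (rule cU, intro continuous_intros cs cc1 cc2 cc3 cc4)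
  qed
qed



lemma ftc_real:
  fixes f f' :: "real \<Rightarrow> real"
  assumes "u \<le> v" and "\<And>y. (f has_real_derivative f' y) (at y)"
  shows "(f' has_integral f v - f u) {u..v}"
  by (rule fundamental_theorem_of_calculus)
    (use assms in \<open>auto simp: has_real_derivative_iff_has_vector_derivative[symmetric]
        intro: has_field_derivative_at_within\<close>)

lemma F_eq_G:
  fixes a a1 a2 b b1 b2 B :: "real \<Rightarrow> real"
  assumes da: "\<And>t. (a has_real_derivative a1 t) (at t)"
    and da1: "\<And>t. (a1 has_real_derivative a2 t) (at t)"
    and ca2: "continuous_on UNIV a2"
    and dB: "\<And>t. (B has_real_derivative b t) (at t)"
    and db: "\<And>t. (b has_real_derivative b1 t) (at t)"
    and db1: "\<And>t. (b1 has_real_derivative b2 t) (at t)"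
    and cb2: "continuous_on UNIV b2"
    and za0: "a 0 = 0" and za10: "a1 0 = 0" and t: "t \<ge> 0"
  shows "1/2 * integral {0..t} (\<lambda>s. integral {x - (t - s) * (C + 1) .. x - (t - s) * (C - 1)}
            (\<lambda>r. a2 s * b r + 2*C*(a1 s * b1 r) + C^2*(a s * b2 r)))
       = a t * b x + 1/2 * integral {0..t} (\<lambda>s. a s * (b1 (x - (t - s) * (C - 1)) - b1 (x - (t - s) * (C + 1))))"
proof -
  have ca: "continuous_on UNIV a" using da by (meson DERIV_continuous continuous_at_imp_continuous_on)
  have cb1: "continuous_on UNIV b1" using db1 by (meson DERIV_continuous continuous_at_imp_continuous_on)
  define \<alpha> where "\<alpha> = (\<lambda>s. x - (t - s) * (C + 1))"
  define \<beta> where "\<beta> = (\<lambda>s. x - (t - s) * (C - 1))"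
  have inner: "integral {\<alpha> s..\<beta> s} (\<lambda>r. a2 s * b r + 2*C*(a1 s * b1 r) + C^2*(a s * b2 r))
      = a2 s * (B (\<beta> s) - B (\<alpha> s)) + 2*C*(a1 s * (b (\<beta> s) - b (\<alpha> s))) + C^2*(a s * (b1 (\<beta> s) - b1 (\<alpha> s)))"
    if "s \<le> t" for s
  proof -
    have le: "\<alpha> s \<le> \<beta> s" using that unfolding \<alpha>_def \<beta>_def by (simp add: algebra_simps)
    have "((\<lambda>r. a2 s * b r + 2*C*(a1 s * b1 r) + C^2*(a s * b2 r)) has_integral
      (a2 s * (B (\<beta> s) - B (\<alpha> s)) + 2*C*(a1 s * (b (\<beta> s) - b (\<alpha> s))) + C^2*(a s * (b1 (\<beta> s) - b1 (\<alpha> s))))) {\<alpha> s..\<beta> s}"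
      by (intro has_integral_add has_integral_mult_right ftc_real[OF le] dB db db1)
    then show ?thesis by (rule integral_unique)
  qed
  define D where "D = (\<lambda>s. a2 s * (B (\<beta> s) - B (\<alpha> s)) + 2*C*(a1 s * (b (\<beta> s) - b (\<alpha> s)))
      + (C^2 - 1)*(a s * (b1 (\<beta> s) - b1 (\<alpha> s))))"
  define E where "E = (\<lambda>s. a s * (b1 (\<beta> s) - b1 (\<alpha> s)))"
  define Q where "Q = (\<lambda>s. a1 s * (B (\<beta> s) - B (\<alpha> s)) + a s * ((C+1) * b (\<beta> s) - (C-1) * b (\<alpha> s)))"
  have dQ: "(Q has_real_derivative D s) (at s)" for s
  proof -
    have dBb: "((\<lambda>s. B (\<beta> s)) has_real_derivative b (\<beta> s) * (C - 1)) (at s)"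
      unfolding \<beta>_def by (rule DERIV_chain2[OF dB]) (auto intro!: derivative_eq_intros)
    have dBa: "((\<lambda>s. B (\<alpha> s)) has_real_derivative b (\<alpha> s) * (C + 1)) (at s)"
      unfolding \<alpha>_def by (rule DERIV_chain2[OF dB]) (auto intro!: derivative_eq_intros)
    have dbb: "((\<lambda>s. b (\<beta> s)) has_real_derivative b1 (\<beta> s) * (C - 1)) (at s)"
      unfolding \<beta>_def by (rule DERIV_chain2[OF db]) (auto intro!: derivative_eq_intros)
    have dba: "((\<lambda>s. b (\<alpha> s)) has_real_derivative b1 (\<alpha> s) * (C + 1)) (at s)"
      unfolding \<alpha>_def by (rule DERIV_chain2[OF db]) (auto intro!: derivative_eq_intros)
    have "(Q has_real_derivative
        (a2 s * (B (\<beta> s) - B (\<alpha> s)) + (b (\<beta> s) * (C - 1) - b (\<alpha> s) * (C + 1)) * a1 s)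
        + (a1 s * ((C+1) * b (\<beta> s) - (C-1) * b (\<alpha> s))
           + ((C+1) * (b1 (\<beta> s) * (C - 1)) - (C-1) * (b1 (\<alpha> s) * (C + 1))) * a s)) (at s)"
      unfolding Q_def
      by (intro DERIV_add DERIV_mult DERIV_diff DERIV_cmult da da1 dBb dBa dbb dba)
    then show ?thesis
      by (rule DERIV_cong) (simp add: D_def algebra_simps power2_eq_square)
  qed
  have QD: "(D has_integral Q t - Q 0) {0..t}" by (rule ftc_real[OF t dQ])
  have Qt: "Q t - Q 0 = 2 * (a t * b x)"
    unfolding Q_def \<alpha>_def \<beta>_def by (simp add: za0 za10 algebra_simps)
  have Eint: "E integrable_on {0..t}" unfolding E_def \<alpha>_def \<beta>_def
    by (intro integrable_continuous_interval continuous_intros continuous_on_compose2[OF ca]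
        continuous_on_compose2[OF cb1]) auto
  have "integral {0..t} (\<lambda>s. integral {\<alpha> s..\<beta> s} (\<lambda>r. a2 s * b r + 2*C*(a1 s * b1 r) + C^2*(a s * b2 r)))
      = integral {0..t} (\<lambda>s. D s + E s)"
  proof (rule integral_cong)
    fix s assume "s \<in> {0..t}"
    then have st: "s \<le> t" by simp
    show "integral {\<alpha> s..\<beta> s} (\<lambda>r. a2 s * b r + 2*C*(a1 s * b1 r) + C^2*(a s * b2 r)) = D s + E s"
      unfolding inner[OF st] D_def E_def by (simp add: algebra_simps power2_eq_square)
  qed
  also have "\<dots> = 2 * (a t * b x) + integral {0..t} E"
    using has_integral_add[OF QD integrable_integral[OF Eint]] Qt by (simp add: integral_unique)
  finally show ?thesis unfolding \<alpha>_def \<beta>_def E_def by simp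
qed



theorem mainTheorem1:
  fixes C t0 L :: real and a b :: "real \<Rightarrow> real"
  assumes hC: "\<bar>C\<bar> \<noteq> 1"
    and ha_diff: "\<forall>t. a differentiable (at t)"
    and ha_diff2: "\<forall>t. deriv a differentiable (at t)"
    and ha_cont2: "continuous_on UNIV (deriv (deriv a))"
    and ha_nonneg: "\<forall>t. a t \<ge> 0"
    and ht0: "t0 > 0"
    and ha_zero: "\<forall>t. t \<le> 0 \<longrightarrow> a t = 0"
    and ha_one: "\<forall>t. t > t0 \<longrightarrow> a t = 1"
    and hb_diff: "\<forall>x. b differentiable (at x)"
    and hb_diff2: "\<forall>x. deriv b differentiable (at x)"
    and hb_cont2: "continuous_on UNIV (deriv (deriv b))"
    and hL: "L > 0"
    and hb_supp: "\<forall>x. x \<notin> {-L<..<L} \<longrightarrow> b x = 0"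
  defines "h \<equiv> (\<lambda>x t. a t * b x)"
  defines "F \<equiv> (\<lambda>x t. 1/2 * integral {0..t}
              (\<lambda>s. integral {x - (t - s) * (C + 1) .. x - (t - s) * (C - 1)} (\<lambda>r. S2 C h r s)))"
  defines "G \<equiv> (\<lambda>x t. a t * b x + 1/2 * integral {0..t}
              (\<lambda>s. a s * (deriv b (x - (t - s) * (C - 1)) - deriv b (x - (t - s) * (C + 1)))))"
  shows "is_solution C (S2 C h) F
       \<and> (\<forall>f. is_solution C (S2 C h) f \<longrightarrow> (\<forall>x t. t \<ge> 0 \<longrightarrow> f x t = F x t))
       \<and> (\<forall>x t. t \<ge> 0 \<longrightarrow> F x t = G x t)"
proof -
  have da: "\<And>t. (a has_real_derivative deriv a t) (at t)"
    using ha_diff DERIV_deriv_iff_real_differentiable by blast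
  have da1: "\<And>t. (deriv a has_real_derivative deriv (deriv a) t) (at t)"
    using ha_diff2 DERIV_deriv_iff_real_differentiable by blast
  have db: "\<And>t. (b has_real_derivative deriv b t) (at t)"
    using hb_diff DERIV_deriv_iff_real_differentiable by blast
  have db1: "\<And>t. (deriv b has_real_derivative deriv (deriv b) t) (at t)"
    using hb_diff2 DERIV_deriv_iff_real_differentiable by blast
  have za: "\<And>t. t \<le> 0 \<Longrightarrow> a t = 0" using ha_zero by blast
  have za1: "\<And>t. t \<le> 0 \<Longrightarrow> deriv a t = 0"
    using deriv_zero_left[OF da _ za] by blast
  have za2: "\<And>t. t \<le> 0 \<Longrightarrow> deriv (deriv a) t = 0"
    using deriv_zero_left[OF da1 _ za1] by blast
  have cb: "continuous_on UNIV b" using db by (meson DERIV_continuous continuous_at_imp_continuous_on)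
  have ca: "continuous_on UNIV a" using da by (meson DERIV_continuous continuous_at_imp_continuous_on)
  have cb1: "continuous_on UNIV (deriv b)" using db1 by (meson DERIV_continuous continuous_at_imp_continuous_on)
  have S2eq: "S2 C h x t = deriv (deriv a) t * b x + 2*C*(deriv a t * deriv b x)
      + C^2*(a t * deriv (deriv b) x)" for x t
    unfolding h_def by (rule S2_prod[OF da da1 db db1])
  have gS: "S2 C h = (\<lambda>x t. deriv (deriv a) t * b x + 2*C*(deriv a t * deriv b x)
      + C^2*(a t * deriv (deriv b) x))"
    by (intro ext) (simp add: S2eq)
  have Gform: "G = (\<lambda>x t. a t * b x + 1/2 * (conv a (deriv b) (C-1) x t - conv a (deriv b) (C+1) x t))"
  proof (intro ext)
    fix x t
    have i1: "(\<lambda>s. a s * deriv b (x - (t - s) * k)) integrable_on {0..t}" for k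
      by (intro integrable_continuous_interval continuous_intros continuous_on_compose2[OF ca]
          continuous_on_compose2[OF cb1]) auto
    show "G x t = a t * b x + 1/2 * (conv a (deriv b) (C-1) x t - conv a (deriv b) (C+1) x t)"
    proof -
      have eq: "(\<lambda>s. a s * (deriv b (x - (t - s) * (C - 1)) - deriv b (x - (t - s) * (C + 1))))
          = (\<lambda>s. a s * deriv b (x - (t - s) * (C - 1)) - a s * deriv b (x - (t - s) * (C + 1)))"
        by (rule ext) (rule right_diff_distrib)
      show ?thesis unfolding G_def conv_def eq integral_diff[OF i1[of "C-1"] i1[of "C+1"]] ..
    qed
  qed
  have solG: "is_solution C (S2 C h) G"
    unfolding gS Gform by (rule existence[OF da da1 ha_cont2 db db1 hb_cont2 za za1 za2 hC])
  obtain B where dB: "\<And>u. (B has_real_derivative b u) (at u)"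
  proof -
    have "\<exists>B. \<forall>x::real. (-\<infinity>::ereal) < x \<longrightarrow> x < \<infinity> \<longrightarrow> (B has_vector_derivative b x) (at x)"
      by (rule einterval_antiderivative) (use cb in \<open>auto simp: continuous_on_eq_continuous_at\<close>)
    then show ?thesis using that by (auto simp: has_real_derivative_iff_has_vector_derivative)
  qed
  have FG: "F x t = G x t" if t: "t \<ge> 0" for x t
  proof -
    have "F x t = 1/2 * integral {0..t} (\<lambda>s. integral {x - (t - s) * (C + 1) .. x - (t - s) * (C - 1)}
            (\<lambda>r. deriv (deriv a) s * b r + 2*C*(deriv a s * deriv b r) + C^2*(a s * deriv (deriv b) r)))"
      unfolding F_def by (simp add: S2eq)
    also have "\<dots> = G x t"
      unfolding G_def
      by (rule F_eq_G[OF da da1 ha_cont2 dB db db1 hb_cont2 za[of 0] za1[of 0] t]) auto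
    finally show ?thesis .
  qed
  have solF: "is_solution C (S2 C h) F"
    by (rule is_solution_transfer[OF solG FG])
  show ?thesis
    using solF FG uniq[OF _ solF] by blast
qed

end
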